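(* Let $p<q$ be coprime positive integers and $m$ a positive integer such that $q-p$ divides $m$; put $a=m/(q-p)$. Let $A=\mathbb C[X_0,X_1,X_2,X_3,X_4]$ with the $\mathbb Z\times\mathbb Z/m\mathbb Z$-grading in which $X_0$ has degree $(1,0)$, $X_1,X_2$ have degree $(-p,-1)$ and $X_3,X_4$ have degree $(q,1)$. For $s\in\mathbb C$ let $$J_s=(X_0^{q-p},\;X_2,\;X_4,\;s-X_1^{aq}X_3^{ap})\subset A.$$ Then for every $s\in\mathbb C$ and every $(n,d)\in\mathbb Z\times\mathbb Z/m\mathbb Z$ one has $\dim_{\mathbb C}(A/J_s)_{(n,d)}=1$.
   Context: The grading is the weight grading for the action of $G_0\times G_m$ ($G_0\cong\mathbb C^*$, $G_m\cong\mu_m$) on $\mathbb C^5$ given by $t\cdot(x_0,\dots,x_4)=(tx_0,t^{-p}x_1,t^{-p}x_2,t^qx_3,t^qx_4)$ and $\zeta\cdot(x_0,\dots,x_4)=(x_0,\zeta^{-1}x_1,\zeta^{-1}x_2,\zeta x_3,\zeta x_4)$. The condition that $q-p$ divides $m$ is exactly the condition that the associated Popov $SL(2)$-variety $E_{p/q,m}$ is toric. *)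

theory Defs
  imports "HOL-Library.Poly_Mapping" "HOL-Library.Numeral_Type" Complex_Main
begin

type_synonym mono5 = "5 \<Rightarrow>\<^sub>0 nat"
type_synonym poly5 = "mono5 \<Rightarrow>\<^sub>0 complex"

definition X :: "5 \<Rightarrow> poly5" where
  "X i = Poly_Mapping.single (Poly_Mapping.single i 1) 1"

definition Cst :: "complex \<Rightarrow> poly5" where
  "Cst c = Poly_Mapping.single 0 c"

text \<open>Weight degree of a monomial: first component in Z, second in Z/mZ (as an integer
  representative; congruence mod m is used below).\<close>
definition deg1 :: "nat \<Rightarrow> nat \<Rightarrow> mono5 \<Rightarrow> int" where
  "deg1 p q \<alpha> = int (Poly_Mapping.lookup \<alpha> (0::5)) - int p * int (Poly_Mapping.lookup \<alpha> (1::5) + Poly_Mapping.lookup \<alpha> (2::5))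
                  + int q * int (Poly_Mapping.lookup \<alpha> (3::5) + Poly_Mapping.lookup \<alpha> (4::5))"

definition deg2 :: "mono5 \<Rightarrow> int" where
  "deg2 \<alpha> = - int (Poly_Mapping.lookup \<alpha> (1::5) + Poly_Mapping.lookup \<alpha> (2::5)) + int (Poly_Mapping.lookup \<alpha> (3::5) + Poly_Mapping.lookup \<alpha> (4::5))"

definition graded_piece :: "nat \<Rightarrow> nat \<Rightarrow> nat \<Rightarrow> int \<Rightarrow> int \<Rightarrow> poly5 set" where
  "graded_piece p q m n d =
     {f. \<forall>\<alpha>\<in>Poly_Mapping.keys f. deg1 p q \<alpha> = n \<and> deg2 \<alpha> mod int m = d mod int m}"

definition gen_ideal :: "'a::comm_ring_1 list \<Rightarrow> 'a set" where
  "gen_ideal gs = {(\<Sum>i<length gs. cs ! i * gs ! i) | cs. length cs = length gs}"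

text \<open>dim_C of the image of the subspace V in A/J equals k: there are k elements of V
  whose classes form a C-basis of (V + J)/J, i.e. they are linearly independent modulo J
  and span V modulo J.\<close>
definition quot_dim_eq :: "poly5 set \<Rightarrow> poly5 set \<Rightarrow> nat \<Rightarrow> bool" where
  "quot_dim_eq V J k \<longleftrightarrow>
     (\<exists>vs. length vs = k \<and> set vs \<subseteq> V \<and>
        (\<forall>cs. length cs = k \<longrightarrow> (\<Sum>i<k. Cst (cs ! i) * vs ! i) \<in> J \<longrightarrow> (\<forall>i<k. cs ! i = 0)) \<and>
        (\<forall>w\<in>V. \<exists>cs. length cs = k \<and> w - (\<Sum>i<k. Cst (cs ! i) * vs ! i) \<in> J))"

end

theory Submission imports Defs begin

lemma U5: "(UNIV::5 set) = {0,1,2,3,4}"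
proof -
  have "card {0::5,1,2,3,4} = card (UNIV::5 set)" by simp
  then show ?thesis using card_subset_eq[of "UNIV::5 set" "{0,1,2,3,4}"] by simp
qed

lemma all5: "(\<And>i::5. i = 0 \<or> i = 1 \<or> i = 2 \<or> i = 3 \<or> i = 4)"
  using U5 by blast

lemma upd: "a \<notin> Poly_Mapping.keys f \<Longrightarrow> Poly_Mapping.update a b f = f + Poly_Mapping.single a b"
  by (rule poly_mapping_eqI) (auto simp: lookup_update lookup_add lookup_single not_in_keys_iff_lookup_eq_zero)

lemma add_induct:
  fixes P :: "('a \<Rightarrow>\<^sub>0 'b::comm_monoid_add) \<Rightarrow> bool"
  assumes "P 0" and "\<And>f a b. a \<notin> Poly_Mapping.keys f \<Longrightarrow> P f \<Longrightarrow> P (f + Poly_Mapping.single a b)"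
  shows "P f"
proof (induction f rule: update_induct)
  case const then show ?case using assms(1) by simp
next
  case (update f a b) then show ?case using assms(2)[of a f b] upd[of a f b] by simp
qed

lemma X_pow: "X i ^ k = Poly_Mapping.single (Poly_Mapping.single i k) 1"
proof (induction k)
  case 0 then show ?case by (simp add: one_poly_mapping.abs_eq single.abs_eq)
next
  case (Suc k) then show ?case by (simp add: X_def mult_single flip: single_add)
qed

lemma gi_add: assumes "x \<in> gen_ideal gs" "y \<in> gen_ideal gs" shows "x + y \<in> gen_ideal gs"
proof -
  obtain cs ds where c: "length cs = length gs" "x = (\<Sum>i<length gs. cs ! i * gs ! i)"
    and d: "length ds = length gs" "y = (\<Sum>i<length gs. ds ! i * gs ! i)"
    using assms unfolding gen_ideal_def by blast
  define es where "es = map (\<lambda>i. cs ! i + ds ! i) [0..<length gs]"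
  have "x + y = (\<Sum>i<length gs. es ! i * gs ! i)"
    unfolding c d es_def by (simp add: sum.distrib[symmetric] distrib_right)
  moreover have "length es = length gs" by (simp add: es_def)
  ultimately show ?thesis unfolding gen_ideal_def by blast
qed

lemma gi_mult: assumes "x \<in> gen_ideal gs" shows "r * x \<in> gen_ideal gs"
proof -
  obtain cs where c: "length cs = length gs" "x = (\<Sum>i<length gs. cs ! i * gs ! i)"
    using assms unfolding gen_ideal_def by blast
  define es where "es = map (\<lambda>i. r * cs ! i) [0..<length gs]"
  have "r * x = (\<Sum>i<length gs. es ! i * gs ! i)"
    unfolding c es_def by (simp add: sum_distrib_left mult.assoc)
  moreover have "length es = length gs" by (simp add: es_def)
  ultimately show ?thesis unfolding gen_ideal_def by blast
qed

lemma gi_gen: assumes "k < length gs" shows "r * gs ! k \<in> gen_ideal gs"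
proof -
  define es where "es = map (\<lambda>i. if i = k then r else 0) [0..<length gs]"
  have "(\<Sum>i<length gs. es ! i * gs ! i) = (\<Sum>i<length gs. if i = k then r * gs ! k else 0)"
    by (rule sum.cong) (auto simp: es_def)
  also have "\<dots> = r * gs ! k" using assms by simp
  finally have "r * gs ! k = (\<Sum>i<length gs. es ! i * gs ! i)" by simp
  moreover have "length es = length gs" by (simp add: es_def)
  ultimately show ?thesis unfolding gen_ideal_def by blast
qed

lemma gi_diff: assumes "x \<in> gen_ideal gs" "y \<in> gen_ideal gs" shows "x - y \<in> gen_ideal gs"
  using gi_add[OF assms(1) gi_mult[OF assms(2), of "-1"]] by simp

definition phi :: "(mono5 \<Rightarrow> complex) \<Rightarrow> poly5 \<Rightarrow> complex" where
  "phi w f = Sum_any (\<lambda>\<beta>. Poly_Mapping.lookup f \<beta> * w \<beta>)"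

lemma fin_aux: "finite {\<beta>. Poly_Mapping.lookup (f::poly5) \<beta> * w \<beta> \<noteq> 0}"
  by (rule finite_subset[of _ "Poly_Mapping.keys f"]) (auto simp: in_keys_iff)

lemma phi_add: "phi w (f + g) = phi w f + phi w g"
  unfolding phi_def lookup_add distrib_right
  by (rule Sum_any.distrib[OF fin_aux fin_aux])

lemma phi_zero: "phi w 0 = 0" by (simp add: phi_def)

lemma phi_diff: "phi w (f - g) = phi w f - phi w g"
  using phi_add[of w "f - g" g] by simp

lemma phi_single: "phi w (Poly_Mapping.single \<gamma> c) = c * w \<gamma>"
  unfolding phi_def lookup_single by (simp add: when_mult)

lemma phi_sum: "phi w (\<Sum>i<(n::nat). F i) = (\<Sum>i<n. phi w (F i))"
  by (induction n) (simp_all add: phi_zero phi_add)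

lemma arith_core:
  fixes P Q A n d :: int
  assumes P: "0 < P" and PQ: "P < Q" and A: "0 < A"
  shows "\<exists>I J0 K0. 0 \<le> I \<and> I < Q - P \<and> 0 \<le> J0 \<and> 0 \<le> K0 \<and> I - P * J0 + Q * K0 = n \<and>
     (K0 - J0) mod (A*(Q-P)) = d mod (A*(Q-P)) \<and> (J0 < A*Q \<or> K0 < A*P) \<and>
     (\<forall>I' J K. 0 \<le> I' \<longrightarrow> I' < Q - P \<longrightarrow> 0 \<le> J \<longrightarrow> 0 \<le> K \<longrightarrow> I' - P * J + Q * K = n \<longrightarrow>
        (K - J) mod (A*(Q-P)) = d mod (A*(Q-P)) \<longrightarrow> I' = I \<and> (\<exists>t\<ge>0. J = J0 + t*(A*Q) \<and> K = K0 + t*(A*P)))"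
proof -
  define r where "r = Q - P"
  have r: "0 < r" using PQ by (simp add: r_def)
  define i0 where "i0 = (n - Q*d) mod r"
  define j1 where "j1 = (n - Q*d) div r"
  have e1: "n - Q*d = r*j1 + i0" unfolding i0_def j1_def by simp
  have i0: "0 \<le> i0" "i0 < r" using r by (simp_all add: i0_def)
  define k1 where "k1 = j1 + d"
  have AQ: "0 < A*Q" "0 < A*P" using A P PQ by simp_all
  define l where "l = min (j1 div (A*Q)) (k1 div (A*P))"
  define J0 where "J0 = j1 - A*Q*l"
  define K0 where "K0 = k1 - A*P*l"
  have "A*Q*l \<le> A*Q*(j1 div (A*Q))" using AQ unfolding l_def by (intro mult_left_mono) auto
  also have "\<dots> \<le> j1"
  proof -
    have "A*Q*(j1 div (A*Q)) + j1 mod (A*Q) = j1" by (rule mult_div_mod_eq)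
    moreover have "0 \<le> j1 mod (A*Q)" using AQ by simp
    ultimately show ?thesis by linarith
  qed
  finally have J0: "0 \<le> J0" by (simp add: J0_def)
  have "A*P*l \<le> A*P*(k1 div (A*P))" using AQ unfolding l_def by (intro mult_left_mono) auto
  also have "\<dots> \<le> k1"
  proof -
    have "A*P*(k1 div (A*P)) + k1 mod (A*P) = k1" by (rule mult_div_mod_eq)
    moreover have "0 \<le> k1 mod (A*P)" using AQ by simp
    ultimately show ?thesis by linarith
  qed
  finally have K0: "0 \<le> K0" by (simp add: K0_def)
  have eq: "i0 - P*J0 + Q*K0 = n"
    using e1 unfolding J0_def K0_def k1_def r_def by (simp add: algebra_simps)
  have km: "K0 - J0 = d + (A*r)*l" unfolding J0_def K0_def k1_def r_def by (simp add: algebra_simps)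
  have md: "(K0 - J0) mod (A*(Q-P)) = d mod (A*(Q-P))"
    unfolding km r_def by simp
  have mn: "J0 < A*Q \<or> K0 < A*P"
  proof (cases "l = j1 div (A*Q)")
    case True
    then have "J0 = j1 mod (A*Q)" unfolding J0_def by (simp add: minus_div_mult_eq_mod[symmetric] algebra_simps)
    then show ?thesis using AQ by simp
  next
    case False
    then have "l = k1 div (A*P)" unfolding l_def by (simp add: min_def split: if_splits)
    then have "K0 = k1 mod (A*P)" unfolding K0_def by (simp add: minus_div_mult_eq_mod[symmetric] algebra_simps)
    then show ?thesis using AQ by simp
  qed
  have uq: "I' = i0 \<and> (\<exists>t\<ge>0. J = J0 + t*(A*Q) \<and> K = K0 + t*(A*P))"
    if h: "0 \<le> I'" "I' < Q - P" "0 \<le> J" "0 \<le> K" "I' - P * J + Q * K = n"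
      "(K - J) mod (A*(Q-P)) = d mod (A*(Q-P))" for I' J K
  proof -
    have "(A*(Q-P)) dvd ((K - J) - d)" using h(6) by (simp add: mod_eq_dvd_iff)
    then obtain l' where l': "K - J - d = (A*r)*l'" unfolding r_def by (auto elim: dvdE)
    have Kx: "K = J + d + A*r*l'" using l' by simp
    have "n - Q*d = I' - P*J + Q*(J + d + A*r*l') - Q*d" using h(5) Kx by simp
    then have "n - Q*d = r*(J + Q*A*l') + I'"
      unfolding r_def by (simp add: algebra_simps)
    then have "r*j1 + i0 = r*(J + Q*A*l') + I'" using e1 by simp
    then have "(r*j1 + i0) mod r = (r*(J + Q*A*l') + I') mod r" "(r*j1 + i0) div r = (r*(J + Q*A*l') + I') div r"
      by simp_all
    then have ii: "i0 = I'" "j1 = J + Q*A*l'" using i0 h(1,2) r unfolding r_def by simp_all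
    have Jt: "J = J0 + (l - l')*(A*Q)" using ii unfolding J0_def by (simp add: algebra_simps)
    have Kt: "K = K0 + (l - l')*(A*P)" using ii l' unfolding K0_def k1_def r_def by (simp add: algebra_simps)
    have "l - l' \<ge> 0"
    proof (rule ccontr)
      assume "\<not> 0 \<le> l - l'"
      then have t: "(l' - l) \<ge> 1" by simp
      have "J0 = J + (l' - l)*(A*Q)" using Jt by (simp add: algebra_simps)
      moreover have "(l' - l)*(A*Q) \<ge> 1*(A*Q)" using t AQ by (intro mult_right_mono) auto
      ultimately have "J0 \<ge> A*Q" using h(3) by simp
      moreover have "K0 = K + (l' - l)*(A*P)" using Kt by (simp add: algebra_simps)
      moreover have "(l' - l)*(A*P) \<ge> 1*(A*P)" using t AQ by (intro mult_right_mono) auto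
      ultimately have "J0 \<ge> A*Q \<and> K0 \<ge> A*P" using h(4) by simp
      then show False using mn by simp
    qed
    then show ?thesis using ii Jt Kt by blast
  qed
  show ?thesis
    apply (rule exI[of _ i0], rule exI[of _ J0], rule exI[of _ K0])
    using i0 J0 K0 eq md mn uq unfolding r_def by blast
qed


definition Mt :: "nat \<Rightarrow> nat \<Rightarrow> nat \<Rightarrow> nat \<Rightarrow> mono5" where
  "Mt a p q t = Poly_Mapping.single 1 (t*(a*q)) + Poly_Mapping.single 3 (t*(a*p))"

definition wt :: "mono5 \<Rightarrow> nat \<Rightarrow> nat \<Rightarrow> nat \<Rightarrow> complex \<Rightarrow> mono5 \<Rightarrow> complex" where
  "wt v a p q s \<beta> = (if \<exists>t. \<beta> = v + Mt a p q t then s ^ (THE t. \<beta> = v + Mt a p q t) else 0)"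

lemma lk_Mt: "Poly_Mapping.lookup (Mt a p q t) k =
   (if k = 1 then t*(a*q) else if k = 3 then t*(a*p) else 0)"
  by (auto simp: Mt_def lookup_add lookup_single when_def)

lemma Mt_add: "Mt a p q (t + u) = Mt a p q t + Mt a p q u"
  by (rule poly_mapping_eqI) (simp add: lk_Mt lookup_add algebra_simps)

lemma Mt_inj: assumes "0 < a" "0 < q" "v + Mt a p q t = v + Mt a p q u" shows "t = u"
proof -
  have "Poly_Mapping.lookup (v + Mt a p q t) 1 = Poly_Mapping.lookup (v + Mt a p q u) 1"
    using assms(3) by simp
  then have "t*(a*q) = u*(a*q)" by (simp add: lookup_add lk_Mt)
  then show ?thesis using assms(1,2) by simp
qed

lemma wt_at: assumes "0 < a" "0 < q" shows "wt v a p q s (v + Mt a p q t) = s ^ t"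
proof -
  have "(THE u. v + Mt a p q t = v + Mt a p q u) = t"
    using Mt_inj[OF assms] by blast
  then show ?thesis unfolding wt_def by auto
qed

lemma wt_out: assumes "\<And>t. \<beta> \<noteq> v + Mt a p q t" shows "wt v a p q s \<beta> = 0"
  using assms unfolding wt_def by auto

lemma wt_g: assumes "Poly_Mapping.lookup v k < e" "k \<noteq> 1" "k \<noteq> 3"
  shows "wt v a p q s (\<beta> + Poly_Mapping.single k e) = 0"
proof (rule wt_out)
  fix t show "\<beta> + Poly_Mapping.single k e \<noteq> v + Mt a p q t"
  proof
    assume "\<beta> + Poly_Mapping.single k e = v + Mt a p q t"
    then have "Poly_Mapping.lookup (\<beta> + Poly_Mapping.single k e) k = Poly_Mapping.lookup (v + Mt a p q t) k"
      by simp
    then show False using assms by (simp add: lookup_add lk_Mt)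
  qed
qed

lemma wt_M: assumes "0 < a" "0 < q" "Poly_Mapping.lookup v 1 < a*q \<or> Poly_Mapping.lookup v 3 < a*p"
  shows "wt v a p q s (\<beta> + Mt a p q 1) = s * wt v a p q s \<beta>"
proof (cases "\<exists>t. \<beta> = v + Mt a p q t")
  case True
  then obtain t where t: "\<beta> = v + Mt a p q t" by blast
  have "\<beta> + Mt a p q 1 = v + Mt a p q (Suc t)" unfolding t using Mt_add[of a p q t 1]
    by (simp add: add.assoc)
  then show ?thesis using t wt_at[OF assms(1,2)] by simp
next
  case False
  have "\<beta> + Mt a p q 1 \<noteq> v + Mt a p q t" for t
  proof
    assume h: "\<beta> + Mt a p q 1 = v + Mt a p q t"
    show False
    proof (cases t)
      case 0
      have "Poly_Mapping.lookup (\<beta> + Mt a p q 1) 1 = Poly_Mapping.lookup (v + Mt a p q t) 1"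
           "Poly_Mapping.lookup (\<beta> + Mt a p q 1) 3 = Poly_Mapping.lookup (v + Mt a p q t) 3"
        using h by simp_all
      then show False using assms(3) 0 by (simp add: lookup_add lk_Mt)
    next
      case (Suc u)
      have "\<beta> + Mt a p q 1 = (v + Mt a p q u) + Mt a p q 1" using h Suc Mt_add[of a p q u 1]
        by (simp add: add.assoc)
      then have "\<beta> = v + Mt a p q u" by simp
      then show False using False by blast
    qed
  qed
  then show ?thesis using False by (simp add: wt_out)
qed

lemma phi_mult_gen:
  fixes g :: poly5
  assumes "\<And>\<beta> c. phi w (Poly_Mapping.single \<beta> c * g) = 0"
  shows "phi w (h * g) = 0"
proof (induction h rule: add_induct)
  case 1 then show ?case by (simp add: phi_zero)
next
  case (2 f a b) then show ?case using assms by (simp add: distrib_right phi_add)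
qed


theorem theorem4p2:
  fixes p q m a :: nat and s :: complex and n d :: int
  assumes "0 < p" and "p < q" and "coprime p q" and "0 < m"
    and "(q - p) dvd m" and "a = m div (q - p)"
  shows "quot_dim_eq (graded_piece p q m n d)
           (gen_ideal [X 0 ^ (q - p), X 2, X 4, Cst s - X 1 ^ (a * q) * X 3 ^ (a * p)]) 1"
proof -
  have q0: "0 < q" using assms by simp
  have ma: "m = a * (q - p)" using assms(5,6) by simp
  then have a0: "0 < a" using assms(4) by (cases a) auto
  have mi: "int m = int a * (int q - int p)" using ma assms(2) by (simp add: of_nat_diff)
  have pp: "0 < int p" "int p < int q" "0 < int a" using assms(1,2) a0 by simp_all
  obtain I J0 K0 where H: "0 \<le> I \<and> I < int q - int p \<and> 0 \<le> J0 \<and> 0 \<le> K0 \<and> I - int p * J0 + int q * K0 = n \<and>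
     (K0 - J0) mod (int a*(int q-int p)) = d mod (int a*(int q-int p)) \<and> (J0 < int a*int q \<or> K0 < int a*int p) \<and>
     (\<forall>I' J K. 0 \<le> I' \<longrightarrow> I' < int q - int p \<longrightarrow> 0 \<le> J \<longrightarrow> 0 \<le> K \<longrightarrow> I' - int p * J + int q * K = n \<longrightarrow>
        (K - J) mod (int a*(int q-int p)) = d mod (int a*(int q-int p)) \<longrightarrow> I' = I \<and> (\<exists>t\<ge>0. J = J0 + t*(int a*int q) \<and> K = K0 + t*(int a*int p)))"
    using arith_core[OF pp, of n d] by (elim exE) (erule that)
  have IJK: "0 \<le> I" "I < int q - int p" "0 \<le> J0" "0 \<le> K0"
     "I - int p * J0 + int q * K0 = n"
     "(K0 - J0) mod (int a*(int q- int p)) = d mod (int a*(int q - int p))"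
     "J0 < int a* int q \<or> K0 < int a* int p"
    using H by blast+
  have uq: "\<And>I' J K. 0 \<le> I' \<Longrightarrow> I' < int q - int p \<Longrightarrow> 0 \<le> J \<Longrightarrow> 0 \<le> K \<Longrightarrow>
        I' - int p * J + int q * K = n \<Longrightarrow>
        (K - J) mod (int a*(int q - int p)) = d mod (int a*(int q - int p)) \<Longrightarrow>
        I' = I \<and> (\<exists>t\<ge>0. J = J0 + t*(int a* int q) \<and> K = K0 + t*(int a* int p))"
    using H by blast
  define i where "i = nat I"
  define j0 where "j0 = nat J0"
  define k0 where "k0 = nat K0"
  have ii: "int i = I" "int j0 = J0" "int k0 = K0" using IJK by (simp_all add: i_def j0_def k0_def)
  have iq: "i < q - p" using IJK(2) ii(1) by linarith
  have mn: "j0 < a*q \<or> k0 < a*p"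
  proof -
    have "int j0 < int (a*q) \<or> int k0 < int (a*p)" using IJK(7) ii by simp
    then show ?thesis by (simp only: of_nat_less_iff)
  qed
  define v :: mono5 where "v = Poly_Mapping.single 0 i + Poly_Mapping.single 1 j0 + Poly_Mapping.single 3 k0"
  have lkv: "Poly_Mapping.lookup v k = (if k = 0 then i else if k = 1 then j0 else if k = 3 then k0 else 0)" for k
    by (auto simp: v_def lookup_add lookup_single when_def)
  define M where "M = Mt a p q 1"
  define gs :: "poly5 list" where "gs = [X 0 ^ (q - p), X 2, X 4, Cst s - X 1 ^ (a * q) * X 3 ^ (a * p)]"
  define J where "J = gen_ideal gs"
  define D where "D = {\<beta>. deg1 p q \<beta> = n \<and> deg2 \<beta> mod int m = d mod int m}"
  have g0: "gs ! 0 = Poly_Mapping.single (Poly_Mapping.single 0 (q-p)) 1" by (simp add: gs_def X_pow)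
  have g1: "gs ! 1 = Poly_Mapping.single (Poly_Mapping.single 2 1) 1" by (simp add: gs_def X_def)
  have g2: "gs ! 2 = Poly_Mapping.single (Poly_Mapping.single 4 1) 1" by (simp add: gs_def X_def)
  have g3: "gs ! 3 = Poly_Mapping.single 0 s - Poly_Mapping.single M 1"
    by (simp add: gs_def X_pow mult_single Cst_def M_def Mt_def)
  have lgs: "length gs = 4" by (simp add: gs_def)
  define W where "W = wt v a p q s"
  have Mt0: "Mt a p q 0 = 0" by (rule poly_mapping_eqI) (simp add: lk_Mt)
  have Wv: "W v = 1" using wt_at[OF a0 q0, where v=v and s=s and t=0 and p=p] Mt0 by (simp add: W_def)
  have ms: "Poly_Mapping.single \<beta> c * Poly_Mapping.single \<mu> 1 = Poly_Mapping.single (\<beta> + \<mu>) c" for \<beta> \<mu> :: mono5 and c :: complex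
    by (simp add: mult_single)
  have c0: "phi W (h * gs ! 0) = 0" for h
  proof -
    have "phi W (Poly_Mapping.single \<beta> c * Poly_Mapping.single (Poly_Mapping.single 0 (q-p)) 1) = 0" for \<beta> c
    proof -
      have "Poly_Mapping.lookup v 0 < q - p" using iq by (simp add: lkv)
      then show ?thesis unfolding ms phi_single W_def by (subst wt_g) simp_all
    qed
    then show ?thesis unfolding g0 by (rule phi_mult_gen)
  qed
  have c1: "phi W (h * gs ! 1) = 0" for h
  proof -
    have "phi W (Poly_Mapping.single \<beta> c * Poly_Mapping.single (Poly_Mapping.single 2 1) 1) = 0" for \<beta> c
    proof -
      have "Poly_Mapping.lookup v 2 < 1" by (simp add: lkv)
      then show ?thesis unfolding ms phi_single W_def by (subst wt_g) simp_all
    qed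
    then show ?thesis unfolding g1 by (rule phi_mult_gen)
  qed
  have c2: "phi W (h * gs ! 2) = 0" for h
  proof -
    have "phi W (Poly_Mapping.single \<beta> c * Poly_Mapping.single (Poly_Mapping.single 4 1) 1) = 0" for \<beta> c
    proof -
      have "Poly_Mapping.lookup v 4 < 1" by (simp add: lkv)
      then show ?thesis unfolding ms phi_single W_def by (subst wt_g) simp_all
    qed
    then show ?thesis unfolding g2 by (rule phi_mult_gen)
  qed
  have c3: "phi W (h * gs ! 3) = 0" for h
  proof -
    have "phi W (Poly_Mapping.single \<beta> c * (Poly_Mapping.single 0 s - Poly_Mapping.single M 1)) = 0" for \<beta> c
    proof -
      have e: "Poly_Mapping.single \<beta> c * (Poly_Mapping.single 0 s - Poly_Mapping.single M 1)
             = Poly_Mapping.single \<beta> (c*s) - Poly_Mapping.single (\<beta> + M) c"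
        by (simp add: right_diff_distrib mult_single)
      have mn': "Poly_Mapping.lookup v 1 < a*q \<or> Poly_Mapping.lookup v 3 < a*p" using mn by (simp add: lkv)
      have "W (\<beta> + M) = s * W \<beta>" unfolding W_def M_def by (rule wt_M[OF a0 q0 mn'])
      then show ?thesis unfolding e phi_diff phi_single by simp
    qed
    then show ?thesis unfolding g3 by (rule phi_mult_gen)
  qed
  have phiJ: "phi W f = 0" if fJ: "f \<in> J" for f
  proof -
    obtain cs where cs: "length cs = 4" "f = (\<Sum>i<4. cs ! i * gs ! i)"
      using fJ unfolding J_def gen_ideal_def lgs by blast
    have zz: "phi W (cs ! k * gs ! k) = 0" if "k < 4" for k
    proof -
      have "k = 0 \<or> k = 1 \<or> k = 2 \<or> k = 3" using that by linarith
      then show ?thesis using c0 c1 c2 c3 by blast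
    qed
    show ?thesis unfolding cs(2) phi_sum by (intro sum.neutral) (use zz in auto)
  qed
  have vD: "v \<in> D"
  proof -
    have "deg1 p q v = n" using IJK(5) ii unfolding deg1_def lkv by simp
    moreover have "deg2 v mod int m = d mod int m" using IJK(6) ii mi unfolding deg2_def lkv by simp
    ultimately show ?thesis by (simp add: D_def)
  qed
  have cls: "\<exists>t. \<beta> = v + Mt a p q t" if "\<beta> \<in> D" "Poly_Mapping.lookup \<beta> 0 < q - p"
    "Poly_Mapping.lookup \<beta> 2 = 0" "Poly_Mapping.lookup \<beta> 4 = 0" for \<beta>
  proof -
    have e1: "int (Poly_Mapping.lookup \<beta> 0) - int p * int (Poly_Mapping.lookup \<beta> 1) + int q * int (Poly_Mapping.lookup \<beta> 3) = n"
      using that(1,3,4) unfolding D_def deg1_def by simp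
    have e2: "(int (Poly_Mapping.lookup \<beta> 3) - int (Poly_Mapping.lookup \<beta> 1)) mod (int a*(int q- int p)) = d mod (int a*(int q - int p))"
      using that(1,3,4) mi unfolding D_def deg2_def by simp
    have lt: "int (Poly_Mapping.lookup \<beta> 0) < int q - int p" using that(2) assms(2) by linarith
    obtain t where t: "t \<ge> 0" "int (Poly_Mapping.lookup \<beta> 0) = I"
      "int (Poly_Mapping.lookup \<beta> 1) = J0 + t*(int a* int q)"
      "int (Poly_Mapping.lookup \<beta> 3) = K0 + t*(int a* int p)"
      using uq[OF _ lt _ _ e1 e2] by auto
    define u where "u = nat t"
    have "int (Poly_Mapping.lookup \<beta> 0) = int i" "int (Poly_Mapping.lookup \<beta> 1) = int (j0 + u*(a*q))"
      "int (Poly_Mapping.lookup \<beta> 3) = int (k0 + u*(a*p))"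
      using t ii unfolding u_def by simp_all
    then have "Poly_Mapping.lookup \<beta> 0 = i" "Poly_Mapping.lookup \<beta> 1 = j0 + u*(a*q)"
      "Poly_Mapping.lookup \<beta> 3 = k0 + u*(a*p)"
      by (simp_all only: of_nat_eq_iff)
    then have "\<beta> = v + Mt a p q u"
      using that(3,4) all5 by (intro poly_mapping_eqI) (auto simp: lookup_add lkv lk_Mt)
    then show ?thesis by blast
  qed
  have J0: "0 \<in> J" using gi_gen[of 0 gs 0] lgs by (simp add: J_def)
  have Jg: "r * gs ! k \<in> J" if "k < 4" for r k using gi_gen[of k gs r] that lgs by (simp add: J_def)
  have Jd: "x - y \<in> J" if "x \<in> J" "y \<in> J" for x y using gi_diff that by (simp add: J_def)
  have Ja: "x + y \<in> J" if "x \<in> J" "y \<in> J" for x y using gi_add that by (simp add: J_def)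
  have split: "\<exists>\<gamma>. \<beta> = \<gamma> + Poly_Mapping.single k e" if "e \<le> Poly_Mapping.lookup \<beta> k" for \<beta> :: mono5 and k e
  proof
    show "\<beta> = (\<beta> - Poly_Mapping.single k e) + Poly_Mapping.single k e"
      using that by (intro poly_mapping_eqI) (auto simp: lookup_add lookup_minus lookup_single when_def)
  qed
  have tower: "Poly_Mapping.single (v + Mt a p q t) b - Poly_Mapping.single v (b * s ^ t) \<in> J" for t b
  proof (induction t arbitrary: b)
    case 0 then show ?case using J0 Mt0 by simp
  next
    case (Suc t)
    have st: "Poly_Mapping.single (v + Mt a p q t) b * gs ! 3 \<in> J" by (rule Jg) simp
    have vs: "v + Mt a p q (Suc t) = v + Mt a p q t + M" using Mt_add[of a p q t 1]
      by (simp add: M_def add.assoc)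
    have e: "Poly_Mapping.single (v + Mt a p q t) b * gs ! 3 =
       Poly_Mapping.single (v + Mt a p q t) (b*s) - Poly_Mapping.single (v + Mt a p q (Suc t)) b"
      unfolding g3 vs by (simp add: right_diff_distrib mult_single)
    have "Poly_Mapping.single (v + Mt a p q (Suc t)) b - Poly_Mapping.single v (b * s ^ Suc t) =
      (Poly_Mapping.single (v + Mt a p q t) (b*s) - Poly_Mapping.single v (b * s * s ^ t)) -
      Poly_Mapping.single (v + Mt a p q t) b * gs ! 3"
      unfolding e by (simp add: algebra_simps)
    then show ?case using Jd[OF Suc.IH[of "b*s"] st] by simp
  qed
  have mono: "\<exists>c. Poly_Mapping.single \<beta> b - Poly_Mapping.single v c \<in> J" if bD: "\<beta> \<in> D" for \<beta> b
  proof (cases "q - p \<le> Poly_Mapping.lookup \<beta> 0 \<or> 1 \<le> Poly_Mapping.lookup \<beta> 2 \<or> 1 \<le> Poly_Mapping.lookup \<beta> 4")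
    case True
    have "Poly_Mapping.single \<beta> b \<in> J"
    proof -
      { assume "q - p \<le> Poly_Mapping.lookup \<beta> 0"
        then obtain \<gamma> where "\<beta> = \<gamma> + Poly_Mapping.single 0 (q-p)" using split by blast
        then have "Poly_Mapping.single \<beta> b = Poly_Mapping.single \<gamma> b * gs ! 0" unfolding g0 by (simp add: ms)
        then have ?thesis using Jg[of 0] by simp }
      moreover
      { assume "1 \<le> Poly_Mapping.lookup \<beta> 2"
        then obtain \<gamma> where "\<beta> = \<gamma> + Poly_Mapping.single 2 1" using split by blast
        then have "Poly_Mapping.single \<beta> b = Poly_Mapping.single \<gamma> b * gs ! 1" unfolding g1 by (simp add: ms)
        then have ?thesis using Jg[of 1] by simp }
      moreover
      { assume "1 \<le> Poly_Mapping.lookup \<beta> 4"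
        then obtain \<gamma> where "\<beta> = \<gamma> + Poly_Mapping.single 4 1" using split by blast
        then have "Poly_Mapping.single \<beta> b = Poly_Mapping.single \<gamma> b * gs ! 2" unfolding g2 by (simp add: ms)
        then have ?thesis using Jg[of 2] by simp }
      ultimately show ?thesis using True by blast
    qed
    then show ?thesis by (intro exI[of _ 0]) simp
  next
    case False
    then obtain t where "\<beta> = v + Mt a p q t" using cls[OF bD] by auto
    then show ?thesis using tower by blast
  qed
  have span: "Poly_Mapping.keys f \<subseteq> D \<longrightarrow> (\<exists>c. f - Poly_Mapping.single v c \<in> J)" for f
  proof (induction f rule: add_induct)
    case 1 then show ?case using J0 by (intro impI exI[of _ 0]) simp
  next
    case (2 f a b)
    show ?case
    proof
      assume k: "Poly_Mapping.keys (f + Poly_Mapping.single a b) \<subseteq> D"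
      show "\<exists>c. f + Poly_Mapping.single a b - Poly_Mapping.single v c \<in> J"
      proof (cases "b = 0")
        case True then show ?thesis using 2 k by simp
      next
        case False
        have kf: "Poly_Mapping.keys f \<subseteq> Poly_Mapping.keys (f + Poly_Mapping.single a b)"
          using 2(1) by (auto simp: in_keys_iff lookup_add lookup_single when_def)
        have ka: "a \<in> Poly_Mapping.keys (f + Poly_Mapping.single a b)"
          using 2(1) False by (auto simp: in_keys_iff lookup_add)
        obtain c1 where c1: "f - Poly_Mapping.single v c1 \<in> J" using 2(2) k kf by blast
        obtain c2 where c2: "Poly_Mapping.single a b - Poly_Mapping.single v c2 \<in> J"
          using mono ka k by blast
        have "f + Poly_Mapping.single a b - Poly_Mapping.single v (c1 + c2) =
          (f - Poly_Mapping.single v c1) + (Poly_Mapping.single a b - Poly_Mapping.single v c2)"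
          by (simp add: single_add algebra_simps)
        then show ?thesis using Ja[OF c1 c2] by metis
      qed
    qed
  qed
  have Cv: "Cst c * Poly_Mapping.single v 1 = Poly_Mapping.single v c" for c
    by (simp add: Cst_def mult_single)
  have VD: "graded_piece p q m n d = {f. Poly_Mapping.keys f \<subseteq> D}"
    unfolding graded_piece_def D_def by auto
  show ?thesis
    unfolding quot_dim_eq_def
  proof (intro exI[of _ "[Poly_Mapping.single v 1]"] conjI allI impI ballI)
    show "length [Poly_Mapping.single v (1::complex)] = 1" by simp
    show "set [Poly_Mapping.single v 1] \<subseteq> graded_piece p q m n d" using vD by (simp add: VD)
  next
    fix cs :: "complex list" and k :: nat
    assume "length cs = 1" and h: "(\<Sum>i<1. Cst (cs ! i) * [Poly_Mapping.single v 1] ! i)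
        \<in> gen_ideal [X 0 ^ (q - p), X 2, X 4, Cst s - X 1 ^ (a * q) * X 3 ^ (a * p)]" and "k < 1"
    then have "Poly_Mapping.single v (cs ! 0) \<in> J" by (simp add: J_def gs_def Cv)
    then have "phi W (Poly_Mapping.single v (cs ! 0)) = 0" by (rule phiJ)
    then show "cs ! k = 0" using Wv \<open>k < 1\<close> by (simp add: phi_single)
  next
    fix w assume "w \<in> graded_piece p q m n d"
    then obtain c where "w - Poly_Mapping.single v c \<in> J" using span VD by blast
    then show "\<exists>cs. length cs = 1 \<and> w - (\<Sum>i<1. Cst (cs ! i) * [Poly_Mapping.single v 1] ! i)
        \<in> gen_ideal [X 0 ^ (q - p), X 2, X 4, Cst s - X 1 ^ (a * q) * X 3 ^ (a * p)]"
      by (intro exI[of _ "[c]"]) (simp add: J_def gs_def Cv)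
  qed
qed

end
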